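(* Let $I=[0,\infty]$, let $\mu$ be a Borel probability measure on $I$ with $F(t)=\mu[0,t]$, fix $T>0$ and $\alpha\in[0,1]$, put $F(T-)=\mu[0,T)$, and assume $\alpha>F(T-)>0$ and $F(T')<F(T)$ for all $T'\in[0,T)$. Let $\tilde\mu^*_\alpha(A)=\mu(A\cap[0,T))\frac{\alpha}{F(T-)}+\mu(A\cap[T,\infty])\frac{1-\alpha}{1-F(T-)}$, and fix $N$ and a probability measure $\tilde{\mathbb{P}}_N$ (expectation $\tilde{\mathbb{E}}_N$) under which $\tau_1,\tau_2,\dots$ are i.i.d. with law $\tilde\mu^*_\alpha$. Fix $T^*\in(0,T)$ with $F((T-T^* )-)>0$. For each $n$ and $t\in[0,T)$ let $Z^{(n)}_t=\chi_{\{\tau_n<T-t\}}$, and let $\mathscr{G}_t=\sigma\{Z^{(n)}_s:0\le s\le t,\ n\ge1\}$. For $t\in[0,T^*]$ define $$A^{(n)}_t=-\int_{r\in[T-t,T)}\frac{1}{F(r)}Z^{(n)}_{(T-r)-}\,dF_r,\qquad M^{(n)}_t=Z^{(n)}_t-\chi_{\{\tau_n<T\}}-A^{(n)}_t,$$ where $Z^{(n)}_{(T-r)-}$ is the left limit of $u\mapsto Z^{(n)}_u$ at $u=T-r$ and $dF_r$ is the Lebesgue–Stieltjes measure of $F$. Then for every $n\in\{1,\dots,N\}$, $M^{(n)}$ is a zero-mean martingale under $\tilde{\mathbb{P}}_N$ with respect to $\{\mathscr{G}_t;t\in[0,T^*]\}$, i.e. $\tilde{\mathbb{E}}_N[M^{(n)}_t|\mathscr{G}_s]=M^{(n)}_s$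 for $0\le s\le t\le T^*$ and $\tilde{\mathbb{E}}_N[M^{(n)}_t]=0$.
   Context: $I=[0,\infty]$ is the compactified half-line with its usual order and topology. *)

theory Defs
  imports "HOL-Probability.Probability"
begin

text \<open>The compactified half-line I = [0,\<infinity>] is the type ennreal (with its order topology).\<close>

definition cdfI :: "ennreal measure \<Rightarrow> ennreal \<Rightarrow> real" where
  "cdfI \<mu> t = measure \<mu> {..t}"

definition cdfI_left :: "ennreal measure \<Rightarrow> ennreal \<Rightarrow> real" where
  "cdfI_left \<mu> t = measure \<mu> {..<t}"

definition Zproc :: "(nat \<Rightarrow> 'w \<Rightarrow> ennreal) \<Rightarrow> real \<Rightarrow> nat \<Rightarrow> real \<Rightarrow> 'w \<Rightarrow> real" where
  "Zproc \<tau> T n t \<omega> = (if \<tau> n \<omega> < ennreal (T - t) then 1 else 0)"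

definition Zleft :: "(nat \<Rightarrow> 'w \<Rightarrow> ennreal) \<Rightarrow> real \<Rightarrow> nat \<Rightarrow> real \<Rightarrow> 'w \<Rightarrow> real" where
  "Zleft \<tau> T n x \<omega> = Lim (at_left x) (\<lambda>u. Zproc \<tau> T n u \<omega>)"

text \<open>Filtration G_t = sigma{Z^(n)_s : 0 \<le> s \<le> t, n \<ge> 1}; since each Z^(n)_s is an
  indicator, its sigma-algebra is generated by the event {Z^(n)_s = 1}.\<close>
definition Gfilt :: "'w measure \<Rightarrow> (nat \<Rightarrow> 'w \<Rightarrow> ennreal) \<Rightarrow> real \<Rightarrow> real \<Rightarrow> 'w measure" where
  "Gfilt P \<tau> T t = sigma (space P)
     {{\<omega> \<in> space P. \<tau> n \<omega> < ennreal (T - s)} | n s. 1 \<le> n \<and> 0 \<le> s \<and> s \<le> t}"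

definition Aproc :: "ennreal measure \<Rightarrow> (nat \<Rightarrow> 'w \<Rightarrow> ennreal) \<Rightarrow> real \<Rightarrow> nat \<Rightarrow> real \<Rightarrow> 'w \<Rightarrow> real" where
  "Aproc \<mu> \<tau> T n t \<omega> =
     - (LINT r:{ennreal (T - t)..<ennreal T}|\<mu>. (1 / cdfI \<mu> r) * Zleft \<tau> T n (T - enn2real r) \<omega>)"

definition Mproc :: "ennreal measure \<Rightarrow> (nat \<Rightarrow> 'w \<Rightarrow> ennreal) \<Rightarrow> real \<Rightarrow> nat \<Rightarrow> real \<Rightarrow> 'w \<Rightarrow> real" where
  "Mproc \<mu> \<tau> T n t \<omega> =
     Zproc \<tau> T n t \<omega> - (if \<tau> n \<omega> < ennreal T then 1 else 0) - Aproc \<mu> \<tau> T n t \<omega>"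

end

theory Submission
  imports Defs
begin


lemma Zleft_eq:
  assumes "0 \<le> T - x"
  shows "Zleft \<tau> T n x \<omega> = (if \<tau> n \<omega> \<le> ennreal (T - x) then 1 else 0)"
proof -
  let ?v = "\<tau> n \<omega>" and ?y = "T - x"
  have ev: "eventually (\<lambda>u. Zproc \<tau> T n u \<omega> = (if ?v \<le> ennreal ?y then 1 else 0)) (at_left x)"
  proof (cases "?v \<le> ennreal ?y")
    case True
    show ?thesis
    proof (rule eventually_mono[OF eventually_at_left_real[where a=x and b="x - 1"]])
      fix u assume "u \<in> {x - 1<..<x}"
      then have "ennreal ?y < ennreal (T - u)" using assms by (simp add: ennreal_less_iff)
      then show "Zproc \<tau> T n u \<omega> = (if ?v \<le> ennreal ?y then 1 else 0)"
        using True by (simp add: Zproc_def)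
    qed simp
  next
    case False
    show ?thesis
    proof (cases "?v = top")
      case True
      then show ?thesis using False by (simp add: Zproc_def)
    next
      case nt: False
      then obtain \<sigma> where s: "?v = ennreal \<sigma>" "0 \<le> \<sigma>"
        by (metis ennreal_cases top.not_eq_extremum)
      then have "\<sigma> > ?y" using False by (metis ennreal_leI not_less)
      show ?thesis
      proof (rule eventually_mono[OF eventually_at_left_real[where a=x and b="x - (\<sigma> - ?y)"]])
        show "x - (\<sigma> - ?y) < x" using \<open>\<sigma> > ?y\<close> by simp
        fix u assume "u \<in> {x - (\<sigma> - ?y)<..<x}"
        then have "T - u < \<sigma>" by auto
        then have "ennreal (T - u) \<le> ?v" using s by (simp add: ennreal_leI)
        then show "Zproc \<tau> T n u \<omega> = (if ?v \<le> ennreal ?y then 1 else 0)"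
          using False by (auto simp add: Zproc_def)
      qed
    qed
  qed
  have "((\<lambda>u. Zproc \<tau> T n u \<omega>) \<longlongrightarrow> (if ?v \<le> ennreal ?y then 1 else 0)) (at_left x)"
    by (rule tendsto_eventually[OF ev])
  then show ?thesis unfolding Zleft_def by (intro tendsto_Lim) auto
qed



definition kf :: "ennreal measure \<Rightarrow> ennreal \<Rightarrow> ennreal \<Rightarrow> real" where
  "kf \<mu> x r = 1 / cdfI \<mu> r * (if x \<le> r then 1 else 0)"

definition hfun :: "ennreal measure \<Rightarrow> real \<Rightarrow> ennreal \<Rightarrow> ennreal \<Rightarrow> real" where
  "hfun \<mu> T c x = (LINT r:{c..<ennreal T}|\<mu>. kf \<mu> x r)"

lemma pair_le_meas:
  "(\<lambda>(r::ennreal, x::ennreal). if x \<le> r then 1 else (0::real)) \<in> borel_measurable (borel \<Otimes>\<^sub>M borel)"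
  by measurable

lemma pair_le_meas2:
  "(\<lambda>(x::ennreal, r::ennreal). if x \<le> r then 1 else (0::real)) \<in> borel_measurable (borel \<Otimes>\<^sub>M borel)"
  by measurable

lemma cdfI_meas:
  assumes "prob_space \<mu>" "sets \<mu> = sets borel"
  shows "cdfI \<mu> \<in> borel_measurable borel"
proof -
  interpret prob_space \<mu> by fact
  have eq: "cdfI \<mu> = (\<lambda>r. \<integral>x. (if x \<le> r then 1 else 0) \<partial>\<mu>)"
  proof
    fix r
    have "(\<integral>x. (if x \<le> r then 1 else 0) \<partial>\<mu>) = (\<integral>x. indicator {..r} x \<partial>\<mu>)"
      by (intro Bochner_Integration.integral_cong) (auto simp: indicator_def)
    also have "\<dots> = measure \<mu> {..r}" using assms(2) by (simp add: sets_eq_imp_space_eq)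
    finally show "cdfI \<mu> r = (\<integral>x. (if x \<le> r then 1 else 0) \<partial>\<mu>)" by (simp add: cdfI_def)
  qed
  have "(\<lambda>(r::ennreal, x::ennreal). if x \<le> r then 1 else (0::real)) \<in> borel_measurable (borel \<Otimes>\<^sub>M \<mu>)"
    using pair_le_meas by (subst measurable_cong_sets[OF sets_pair_measure_cong[OF refl assms(2)] refl])
  then show ?thesis unfolding eq
    by (intro borel_measurable_lebesgue_integral) simp
qed

lemma kf_meas:
  assumes "prob_space \<mu>" "sets \<mu> = sets borel"
  shows "(\<lambda>(x, r). kf \<mu> x r) \<in> borel_measurable (borel \<Otimes>\<^sub>M borel)"
proof -
  have [measurable]: "cdfI \<mu> \<in> borel_measurable borel" by (rule cdfI_meas[OF assms])
  show ?thesis unfolding kf_def by measurable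
qed

lemma hfun_meas:
  assumes "prob_space \<mu>" "sets \<mu> = sets borel"
  shows "hfun \<mu> T c \<in> borel_measurable borel"
proof -
  interpret prob_space \<mu> by fact
  have [measurable]: "(\<lambda>(x, r). kf \<mu> x r) \<in> borel_measurable (borel \<Otimes>\<^sub>M borel)" by (rule kf_meas[OF assms])
  have "(\<lambda>(x, r). indicator {c..<ennreal T} r *\<^sub>R kf \<mu> x r) \<in> borel_measurable (borel \<Otimes>\<^sub>M borel)"
    by measurable
  then have "(\<lambda>(x, r). indicator {c..<ennreal T} r *\<^sub>R kf \<mu> x r) \<in> borel_measurable (borel \<Otimes>\<^sub>M \<mu>)"
    by (subst measurable_cong_sets[OF sets_pair_measure_cong[OF refl assms(2)] refl])
  then show ?thesis unfolding hfun_def set_lebesgue_integral_def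
    by (intro borel_measurable_lebesgue_integral) simp
qed


lemma clamp_less: "(c1::'a::linorder) < y \<Longrightarrow> y \<le> cT \<Longrightarrow> (min (max x c1) cT < y) = (x < y)"
  by (auto simp: min_def max_def)
lemma clamp_ge: "(c1::'a::linorder) \<le> cT \<Longrightarrow> c1 \<le> min (max x c1) cT"
  by (auto simp: min_def max_def)
lemma clamp_le: "min (max x c1) (cT::'a::linorder) \<le> cT"
  by (auto simp: min_def max_def)


definition gM :: "ennreal measure \<Rightarrow> real \<Rightarrow> real \<Rightarrow> ennreal \<Rightarrow> real" where
  "gM \<mu> T t x = (if x < ennreal (T - t) then 1 else 0) - (if x < ennreal T then 1 else 0)
     + hfun \<mu> T (ennreal (T - t)) x"

lemma Mproc_eq: "Mproc \<mu> \<tau> T n t = (\<lambda>\<omega>. gM \<mu> T t (\<tau> n \<omega>))"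
proof
  fix \<omega>
  have "Aproc \<mu> \<tau> T n t \<omega> = - hfun \<mu> T (ennreal (T - t)) (\<tau> n \<omega>)"
    unfolding Aproc_def hfun_def set_lebesgue_integral_def
  proof (intro arg_cong[where f=uminus] Bochner_Integration.integral_cong refl)
    fix r
    show "indicator {ennreal (T - t)..<ennreal T} r *\<^sub>R (1 / cdfI \<mu> r * Zleft \<tau> T n (T - enn2real r) \<omega>) = indicator {ennreal (T - t)..<ennreal T} r *\<^sub>R kf \<mu> (\<tau> n \<omega>) r"
    proof (cases "r \<in> {ennreal (T - t)..<ennreal T}")
    case False then show ?thesis by simp
    next
    case r: True
    then have rt: "r < top" using top.not_eq_extremum by fastforce
    have "Zleft \<tau> T n (T - enn2real r) \<omega> = (if \<tau> n \<omega> \<le> ennreal (T - (T - enn2real r)) then 1 else 0)"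
      by (rule Zleft_eq) simp
    also have "ennreal (T - (T - enn2real r)) = r" using rt by simp
    finally show ?thesis using r
      by (simp add: kf_def)
    qed
  qed
  then show "Mproc \<mu> \<tau> T n t \<omega> = gM \<mu> T t (\<tau> n \<omega>)"
    by (simp add: Mproc_def gM_def Zproc_def)
qed

locale L6 =
  fixes \<mu> :: "ennreal measure" and P :: "'w measure" and \<tau> :: "nat \<Rightarrow> 'w \<Rightarrow> ennreal"
    and T \<alpha> Tstar :: real
  assumes mu_prob: "prob_space \<mu>" and mu_borel: "sets \<mu> = sets borel"
    and T_pos: "T > 0"
    and FTpos: "cdfI_left \<mu> (ennreal T) > 0"
    and P_prob: "prob_space P"
    and tau_rv: "\<And>n. n \<ge> 1 \<Longrightarrow> \<tau> n \<in> borel_measurable P"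
    and tau_indep: "prob_space.indep_vars P (\<lambda>_. borel) \<tau> {1..}"
    and tau_law: "\<And>n A. n \<ge> 1 \<Longrightarrow> A \<in> sets borel \<Longrightarrow>
        measure P {\<omega> \<in> space P. \<tau> n \<omega> \<in> A} =
          measure \<mu> (A \<inter> {..<ennreal T}) * (\<alpha> / cdfI_left \<mu> (ennreal T))
          + measure \<mu> (A \<inter> {ennreal T..}) * ((1 - \<alpha>) / (1 - cdfI_left \<mu> (ennreal T)))"
    and Tstar: "0 < Tstar" "Tstar < T"
    and F_Tstar: "cdfI_left \<mu> (ennreal (T - Tstar)) > 0"
begin

interpretation mu: prob_space \<mu> by (rule mu_prob)

abbreviation "F0 \<equiv> cdfI_left \<mu> (ennreal (T - Tstar))"
abbreviation "a \<equiv> \<alpha> / cdfI_left \<mu> (ennreal T)"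

lemma sets_mu[measurable_cong]: "sets \<mu> = sets borel" by (rule mu_borel)

lemma space_mu: "space \<mu> = UNIV" using sets_eq_imp_space_eq[OF mu_borel] by simp

lemma F_ge: "ennreal (T - Tstar) \<le> r \<Longrightarrow> F0 \<le> cdfI \<mu> r"
  unfolding cdfI_def cdfI_left_def
  by (intro mu.finite_measure_mono) (auto simp: mu_borel)

lemma kf_bound: "ennreal (T - Tstar) \<le> r \<Longrightarrow> \<bar>kf \<mu> x r\<bar> \<le> 1 / F0"
proof -
  assume r: "ennreal (T - Tstar) \<le> r"
  have "F0 \<le> cdfI \<mu> r" using F_ge[OF r] .
  then have "\<bar>1 / cdfI \<mu> r\<bar> \<le> 1 / F0" using F_Tstar
    by (simp add: frac_le)
  then show ?thesis using F_Tstar by (auto simp: kf_def)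
qed

lemma kf_meas_mu [measurable]: "(\<lambda>(x, r). kf \<mu> x r) \<in> borel_measurable (borel \<Otimes>\<^sub>M borel)"
  by (rule kf_meas[OF mu_prob mu_borel])

lemma ind_kf_bound:
  assumes "ennreal (T - Tstar) \<le> c"
  shows "\<bar>indicator {c..<d} r * kf \<mu> x r\<bar> \<le> 1 / F0"
  using kf_bound[of r x] assms F_Tstar by (auto simp: indicator_def)

lemma kf_set_integrable:
  assumes "ennreal (T - Tstar) \<le> c"
  shows "set_integrable \<mu> {c..<d} (kf \<mu> x)"
  unfolding set_integrable_def
proof (rule mu.integrable_const_bound[where B="1/F0"])
  show "AE r in \<mu>. norm (indicator {c..<d} r *\<^sub>R kf \<mu> x r) \<le> 1 / F0"
    using ind_kf_bound[OF assms] by simp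
  have [measurable]: "kf \<mu> x \<in> borel_measurable borel"
    using measurable_Pair2[OF kf_meas_mu, of x] by simp
  show "(\<lambda>r. indicator {c..<d} r *\<^sub>R kf \<mu> x r) \<in> borel_measurable \<mu>"
    by measurable
qed

lemma hfun_bound:
  assumes "ennreal (T - Tstar) \<le> c"
  shows "\<bar>hfun \<mu> T c x\<bar> \<le> 1 / F0"
proof -
  have "\<bar>hfun \<mu> T c x\<bar> = norm (\<integral>r. indicator {c..<ennreal T} r *\<^sub>R kf \<mu> x r \<partial>\<mu>)"
    by (simp add: hfun_def set_lebesgue_integral_def)
  also have "\<dots> \<le> (\<integral>r. 1 / F0 \<partial>\<mu>)"
    using kf_set_integrable[OF assms] ind_kf_bound[OF assms]
    by (intro order_trans[OF integral_norm_bound] integral_mono) (auto simp: set_integrable_def)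
  also have "\<dots> = 1 / F0" by (simp add: mu.prob_space)
  finally show ?thesis .
qed

lemma hfun_split:
  assumes "ennreal (T - Tstar) \<le> c1" "c1 \<le> c2" "c2 \<le> ennreal T"
  shows "hfun \<mu> T c1 x = (LINT r:{c1..<c2}|\<mu>. kf \<mu> x r) + hfun \<mu> T c2 x"
proof -
  have "{c1..<ennreal T} = {c1..<c2} \<union> {c2..<ennreal T}" using assms by auto
  moreover have "set_integrable \<mu> {c2..<ennreal T} (kf \<mu> x)"
    using assms order_trans[OF assms(1,2)] by (intro kf_set_integrable) auto
  moreover have "set_integrable \<mu> {c1..<c2} (kf \<mu> x)"
    using assms by (intro kf_set_integrable) auto
  ultimately show ?thesis unfolding hfun_def
    by (simp only:) (rule set_integral_Un, auto)
qed

lemma hfun_T: "hfun \<mu> T (ennreal T) x = 0"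
  by (simp add: hfun_def set_lebesgue_integral_def)

lemma hfun_clamp:
  assumes "c \<le> ennreal T"
  shows "hfun \<mu> T c (min (max x c) (ennreal T)) = hfun \<mu> T c x"
  unfolding hfun_def
proof (intro set_lebesgue_integral_cong allI impI)
  fix r assume r: "r \<in> {c..<ennreal T}"
  then have "(min (max x c) (ennreal T) \<le> r) = (x \<le> r)" using assms
    by (auto simp: min_def max_def)
  then show "kf \<mu> (min (max x c) (ennreal T)) r = kf \<mu> x r" by (simp add: kf_def)
qed (simp add: mu_borel)

end


context L6 begin

interpretation mu: prob_space \<mu> by (rule mu_prob)
interpretation P: prob_space P by (rule P_prob)
interpretation PM: pair_sigma_finite P \<mu>
  by (intro pair_sigma_finite.intro P.sigma_finite_measure_axioms mu.sigma_finite_measure_axioms)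

lemma law_le:
  assumes n: "n \<ge> 1" and r: "r < ennreal T"
  shows "measure P {\<omega> \<in> space P. \<tau> n \<omega> \<le> r} = a * cdfI \<mu> r"
proof -
  have "{..r} \<inter> {..<ennreal T} = {..r}" "{..r} \<inter> {ennreal T..} = {}" using r by auto
  then show ?thesis using tau_law[OF n, of "{..r}"] by (simp add: cdfI_def)
qed

lemma law_Ico:
  assumes n: "n \<ge> 1" and c: "c2 \<le> ennreal T"
  shows "measure P {\<omega> \<in> space P. \<tau> n \<omega> \<in> {c1..<c2}} = a * measure \<mu> {c1..<c2}"
proof -
  have "{c1..<c2} \<inter> {..<ennreal T} = {c1..<c2}" "{c1..<c2} \<inter> {ennreal T..} = {}" using c by auto
  then show ?thesis using tau_law[OF n, of "{c1..<c2}"] by simp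
qed

lemma E_int:
  assumes n: "n \<ge> 1" and c: "ennreal (T - Tstar) \<le> c1" "c1 \<le> c2" "c2 \<le> ennreal T"
  shows "(\<integral>\<omega>. (LINT r:{c1..<c2}|\<mu>. kf \<mu> (\<tau> n \<omega>) r) \<partial>P) = a * measure \<mu> {c1..<c2}"
proof -
  have [measurable]: "\<tau> n \<in> borel_measurable P" by (rule tau_rv[OF n])
  define f where "f \<omega> r = indicator {c1..<c2} r * kf \<mu> (\<tau> n \<omega>) r" for \<omega> r
  have fm: "(\<lambda>(\<omega>, r). f \<omega> r) \<in> borel_measurable (P \<Otimes>\<^sub>M \<mu>)"
  proof -
    have "(\<lambda>(\<omega>, r). kf \<mu> (\<tau> n \<omega>) r) = (\<lambda>(x, r). kf \<mu> x r) \<circ> (\<lambda>(\<omega>, r). (\<tau> n \<omega>, r))"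
      by auto
    also have "\<dots> \<in> borel_measurable (P \<Otimes>\<^sub>M \<mu>)"
      by (rule measurable_comp[OF _ kf_meas_mu]) measurable
    finally have [measurable]: "(\<lambda>(\<omega>, r). kf \<mu> (\<tau> n \<omega>) r) \<in> borel_measurable (P \<Otimes>\<^sub>M \<mu>)" .
    show ?thesis unfolding f_def by measurable
  qed
  interpret PF: finite_measure "P \<Otimes>\<^sub>M \<mu>"
    by (rule finite_measure_pair_measure) unfold_locales
  have fi: "integrable (P \<Otimes>\<^sub>M \<mu>) (\<lambda>(\<omega>, r). f \<omega> r)"
  proof (rule PF.integrable_const_bound[where B="1/F0"])
    show "AE x in P \<Otimes>\<^sub>M \<mu>. norm (case x of (\<omega>, r) \<Rightarrow> f \<omega> r) \<le> 1 / F0"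
      using ind_kf_bound[OF c(1)] by (auto simp: f_def)
  qed (rule fm)
  have "(\<integral>r. (\<integral>\<omega>. f \<omega> r \<partial>P) \<partial>\<mu>) = (\<integral>\<omega>. (\<integral>r. f \<omega> r \<partial>\<mu>) \<partial>P)"
    by (rule PM.Fubini_integral[OF fi])
  moreover have "(\<integral>\<omega>. (\<integral>r. f \<omega> r \<partial>\<mu>) \<partial>P) = (\<integral>\<omega>. (LINT r:{c1..<c2}|\<mu>. kf \<mu> (\<tau> n \<omega>) r) \<partial>P)"
    by (simp add: f_def set_lebesgue_integral_def)
  moreover have "(\<integral>r. (\<integral>\<omega>. f \<omega> r \<partial>P) \<partial>\<mu>) = (\<integral>r. indicator {c1..<c2} r * a \<partial>\<mu>)"
  proof (intro Bochner_Integration.integral_cong refl)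
    fix r
    show "(\<integral>\<omega>. f \<omega> r \<partial>P) = indicator {c1..<c2} r * a"
    proof (cases "r \<in> {c1..<c2}")
      case False then show ?thesis by (simp add: f_def)
    next
      case True
      then have rT: "r < ennreal T" using c by auto
      have "ennreal (T - Tstar) \<le> r" using True c(1) by (meson atLeastLessThan_iff order_trans)
      then have pos: "cdfI \<mu> r > 0" using F_ge[of r] F_Tstar by linarith
      have "(\<integral>\<omega>. f \<omega> r \<partial>P) = (\<integral>\<omega>. (1 / cdfI \<mu> r) * indicator {\<omega> \<in> space P. \<tau> n \<omega> \<le> r} \<omega> \<partial>P)"
        using True by (intro Bochner_Integration.integral_cong refl) (auto simp: f_def kf_def indicator_def)
      also have "\<dots> = (1 / cdfI \<mu> r) * measure P {\<omega> \<in> space P. \<tau> n \<omega> \<le> r}"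
        by simp
      also have "\<dots> = a" using law_le[OF n rT] pos by simp
      finally show ?thesis using True by simp
    qed
  qed
  moreover have "(\<integral>r. indicator {c1..<c2} r * a \<partial>\<mu>) = a * measure \<mu> {c1..<c2}"
    by (simp add: mu_borel)
  ultimately show ?thesis by simp
qed

end


context L6 begin

interpretation mu: prob_space \<mu> by (rule mu_prob)
interpretation P: prob_space P by (rule P_prob)

lemma hfun_meas_mu[measurable]: "hfun \<mu> T c \<in> borel_measurable borel"
  by (rule hfun_meas[OF mu_prob mu_borel])

lemma gM_meas[measurable]: "gM \<mu> T t \<in> borel_measurable borel"
  unfolding gM_def by measurable

lemma cT_le: "0 \<le> t \<Longrightarrow> t \<le> Tstar \<Longrightarrow> ennreal (T - Tstar) \<le> ennreal (T - t)"
  by (simp add: ennreal_leI)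

lemma gM_bound: "0 \<le> t \<Longrightarrow> t \<le> Tstar \<Longrightarrow> \<bar>gM \<mu> T t x\<bar> \<le> 2 + 1 / F0"
  using hfun_bound[OF cT_le, of t x] unfolding gM_def by auto

lemma P_int_bounded:
  "f \<in> borel_measurable P \<Longrightarrow> (\<And>\<omega>. \<bar>f \<omega>\<bar> \<le> (B::real)) \<Longrightarrow> integrable P f"
  by (rule P.integrable_const_bound[where B=B]) auto

lemma d_eq:
  assumes st: "0 \<le> s" "s \<le> t" "t \<le> Tstar"
  shows "gM \<mu> T t x - gM \<mu> T s x =
     - indicator {ennreal (T - t)..<ennreal (T - s)} x + (LINT r:{ennreal (T - t)..<ennreal (T - s)}|\<mu>. kf \<mu> x r)"
proof -
  have c: "ennreal (T - Tstar) \<le> ennreal (T - t)" "ennreal (T - t) \<le> ennreal (T - s)"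
       "ennreal (T - s) \<le> ennreal T"
    using st by (auto simp: ennreal_leI)
  have "hfun \<mu> T (ennreal (T - t)) x = (LINT r:{ennreal (T - t)..<ennreal (T - s)}|\<mu>. kf \<mu> x r) + hfun \<mu> T (ennreal (T - s)) x"
    by (rule hfun_split[OF c])
  moreover have "(if x < ennreal (T - t) then 1 else 0) - (if x < ennreal (T - s) then 1 else (0::real))
      = - indicator {ennreal (T - t)..<ennreal (T - s)} x"
    using c(2) by (auto simp: indicator_def)
  ultimately show ?thesis unfolding gM_def by simp
qed

lemma d_zero:
  assumes st: "0 \<le> s" "s \<le> t" "t \<le> Tstar" and x: "ennreal (T - s) \<le> x"
  shows "gM \<mu> T t x - gM \<mu> T s x = 0"
proof -
  have "(LINT r:{ennreal (T - t)..<ennreal (T - s)}|\<mu>. kf \<mu> x r) = (LINT r:{ennreal (T - t)..<ennreal (T - s)}|\<mu>. 0)"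
    using x by (intro set_lebesgue_integral_cong) (auto simp: mu_borel kf_def)
  then show ?thesis using d_eq[OF st, of x] x by (auto simp add: set_lebesgue_integral_def indicator_def not_less)
qed

lemma E_d:
  assumes n: "n \<ge> 1" and st: "0 \<le> s" "s \<le> t" "t \<le> Tstar"
  shows "(\<integral>\<omega>. gM \<mu> T t (\<tau> n \<omega>) - gM \<mu> T s (\<tau> n \<omega>) \<partial>P) = 0"
proof -
  have [measurable]: "\<tau> n \<in> borel_measurable P" by (rule tau_rv[OF n])
  have c: "ennreal (T - Tstar) \<le> ennreal (T - t)" "ennreal (T - t) \<le> ennreal (T - s)"
       "ennreal (T - s) \<le> ennreal T"
    using st by (auto simp: ennreal_leI)
  define S where "S = {ennreal (T - t)..<ennreal (T - s)}"
  define L where "L \<omega> = (LINT r:S|\<mu>. kf \<mu> (\<tau> n \<omega>) r)" for \<omega>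
  have deq: "gM \<mu> T t (\<tau> n \<omega>) - gM \<mu> T s (\<tau> n \<omega>) = - indicator S (\<tau> n \<omega>) + L \<omega>" for \<omega>
    using d_eq[OF st] unfolding S_def L_def by simp
  have Leq: "L \<omega> = gM \<mu> T t (\<tau> n \<omega>) - gM \<mu> T s (\<tau> n \<omega>) + indicator S (\<tau> n \<omega>)" for \<omega>
    using deq[of \<omega>] by simp
  have i1: "integrable P (\<lambda>\<omega>. indicator S (\<tau> n \<omega>) :: real)"
    by (rule P_int_bounded[where B=1]) (auto simp: S_def indicator_def)
  have i2: "integrable P L"
  proof (rule P_int_bounded[where B="2 * (2 + 1/F0) + 1"])
    show "L \<in> borel_measurable P" unfolding Leq[abs_def] S_def by measurable
    fix \<omega>
    show "\<bar>L \<omega>\<bar> \<le> 2 * (2 + 1/F0) + 1"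
      unfolding Leq using gM_bound[of t "\<tau> n \<omega>"] gM_bound[of s "\<tau> n \<omega>"] st
      by (auto simp: indicator_def)
  qed
  have "(\<integral>\<omega>. gM \<mu> T t (\<tau> n \<omega>) - gM \<mu> T s (\<tau> n \<omega>) \<partial>P) = (\<integral>\<omega>. - indicator S (\<tau> n \<omega>) + L \<omega> \<partial>P)"
    by (simp add: deq)
  also have "\<dots> = - (\<integral>\<omega>. indicator S (\<tau> n \<omega>) \<partial>P) + (\<integral>\<omega>. L \<omega> \<partial>P)"
    using i1 i2 by simp
  also have "(\<integral>\<omega>. indicator S (\<tau> n \<omega>) \<partial>P) = (\<integral>\<omega>. indicator {\<omega> \<in> space P. \<tau> n \<omega> \<in> S} \<omega> \<partial>P)"
    by (intro Bochner_Integration.integral_cong) (auto simp: indicator_def)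
  also have "\<dots> = a * measure \<mu> S"
    using law_Ico[OF n c(3)] unfolding S_def by (simp del: atLeastLessThan_iff)
  also have "(\<integral>\<omega>. L \<omega> \<partial>P) = a * measure \<mu> S"
    unfolding L_def S_def by (rule E_int[OF n c])
  finally show ?thesis by simp
qed

end


context L6 begin

interpretation mu: prob_space \<mu> by (rule mu_prob)
interpretation P: prob_space P by (rule P_prob)

definition "Sgen s = {{\<omega> \<in> space P. \<tau> n \<omega> < ennreal (T - u)} | n u. 1 \<le> n \<and> 0 \<le> u \<and> u \<le> s}"
definition "Cs s = {ennreal (T - u) | u. 0 \<le> u \<and> u \<le> s}"
definition "Gen s = {{\<omega> \<in> space P. \<forall>m\<in>J. \<tau> m \<omega> < c m} | J c. finite J \<and> J \<subseteq> {1..} \<and> (\<forall>m\<in>J. c m \<in> Cs s)}"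

lemma Sgen_Pow: "Sgen s \<subseteq> Pow (space P)" by (auto simp: Sgen_def)
lemma Gen_Pow: "Gen s \<subseteq> Pow (space P)" by (auto simp: Gen_def)

lemma Gfilt_eq: "Gfilt P \<tau> T s = sigma (space P) (Sgen s)"
  unfolding Gfilt_def Sgen_def by simp

lemma space_G[simp]: "space (Gfilt P \<tau> T s) = space P"
  unfolding Gfilt_eq using Sgen_Pow by simp

lemma sets_G: "sets (Gfilt P \<tau> T s) = sigma_sets (space P) (Sgen s)"
  unfolding Gfilt_eq using Sgen_Pow by simp

lemma Sgen_in_G: "1 \<le> n \<Longrightarrow> 0 \<le> u \<Longrightarrow> u \<le> s \<Longrightarrow> {\<omega> \<in> space P. \<tau> n \<omega> < ennreal (T - u)} \<in> sets (Gfilt P \<tau> T s)"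
  unfolding sets_G Sgen_def by (rule sigma_sets.Basic) blast

lemma Gen_in_G:
  assumes "finite J" "J \<subseteq> {1..}" "\<forall>m\<in>J. c m \<in> Cs s"
  shows "{\<omega> \<in> space P. \<forall>m\<in>J. \<tau> m \<omega> < c m} \<in> sets (Gfilt P \<tau> T s)"
  using assms
proof (induction J rule: finite_induct)
  case empty
  then show ?case using sets.top[of "Gfilt P \<tau> T s"] by simp
next
  case (insert m J)
  then obtain u where u: "c m = ennreal (T - u)" "0 \<le> u" "u \<le> s" by (auto simp: Cs_def)
  have "{\<omega> \<in> space P. \<forall>m'\<in>insert m J. \<tau> m' \<omega> < c m'} =
      {\<omega> \<in> space P. \<tau> m \<omega> < ennreal (T - u)} \<inter> {\<omega> \<in> space P. \<forall>m\<in>J. \<tau> m \<omega> < c m}"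
    using u by auto
  moreover have "{\<omega> \<in> space P. \<tau> m \<omega> < ennreal (T - u)} \<in> sets (Gfilt P \<tau> T s)"
    using insert u by (intro Sgen_in_G) auto
  ultimately show ?case using insert by auto
qed

lemma sets_G_Gen: "sets (Gfilt P \<tau> T s) = sigma_sets (space P) (Gen s)"
  unfolding sets_G
proof (rule sigma_sets_eqI)
  fix a assume "a \<in> Sgen s"
  then obtain m u where a: "a = {\<omega> \<in> space P. \<tau> m \<omega> < ennreal (T - u)}" "1 \<le> m" "0 \<le> u" "u \<le> s"
    by (auto simp: Sgen_def)
  then have "a = {\<omega> \<in> space P. \<forall>m'\<in>{m}. \<tau> m' \<omega> < (\<lambda>_. ennreal (T - u)) m'}" by simp
  moreover have "\<forall>m'\<in>{m}. (\<lambda>_. ennreal (T - u)) m' \<in> Cs s" using a unfolding Cs_def by blast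
  then have "{\<omega> \<in> space P. \<forall>m'\<in>{m}. \<tau> m' \<omega> < (\<lambda>_. ennreal (T - u)) m'} \<in> Gen s"
    unfolding Gen_def using a(2) by (intro CollectI exI[of _ "{m}"] exI[of _ "\<lambda>_. ennreal (T - u)"]) auto
  ultimately show "a \<in> sigma_sets (space P) (Gen s)" by auto
next
  fix b assume "b \<in> Gen s"
  then obtain J c where "b = {\<omega> \<in> space P. \<forall>m\<in>J. \<tau> m \<omega> < c m}" "finite J" "J \<subseteq> {1..}" "\<forall>m\<in>J. c m \<in> Cs s"
    by (auto simp: Gen_def)
  then have "b \<in> sets (Gfilt P \<tau> T s)" using Gen_in_G by simp
  then show "b \<in> sigma_sets (space P) (Sgen s)" unfolding sets_G .
qed

lemma Cs_min:
  assumes "x \<in> Cs s" "y \<in> Cs s" shows "min x y \<in> Cs s"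
proof -
  obtain u1 u2 where u: "x = ennreal (T - u1)" "0 \<le> u1" "u1 \<le> s" "y = ennreal (T - u2)" "0 \<le> u2" "u2 \<le> s"
    using assms unfolding Cs_def by blast
  have "min x y = ennreal (T - max u1 u2)"
  proof (cases "u1 \<le> u2")
    case True
    then have "ennreal (T - u2) \<le> ennreal (T - u1)" by (intro ennreal_leI) simp
    then show ?thesis unfolding u using True by (simp add: min_absorb2 max_absorb2)
  next
    case False
    then have "ennreal (T - u1) \<le> ennreal (T - u2)" by (intro ennreal_leI) simp
    then show ?thesis unfolding u using False by (simp add: min_absorb1 max_absorb1)
  qed
  moreover have "0 \<le> max u1 u2" "max u1 u2 \<le> s" using u by auto
  ultimately show ?thesis unfolding Cs_def by blast
qed

lemma Gen_Int_stable: "Int_stable (Gen s)"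
  unfolding Int_stable_def
proof (intro ballI)
  fix A B assume "A \<in> Gen s" "B \<in> Gen s"
  then obtain J1 J2 :: "nat set" and c1 c2 :: "nat \<Rightarrow> ennreal" where
    AB: "A = {\<omega> \<in> space P. \<forall>m\<in>J1. \<tau> m \<omega> < c1 m}" "B = {\<omega> \<in> space P. \<forall>m\<in>J2. \<tau> m \<omega> < c2 m}"
    and h: "finite J1" "J1 \<subseteq> {1..}" "\<forall>m\<in>J1. c1 m \<in> Cs s" "finite J2" "J2 \<subseteq> {1..}" "\<forall>m\<in>J2. c2 m \<in> Cs s"
    unfolding Gen_def by blast
  define c where "c m = (if m \<in> J1 then (if m \<in> J2 then min (c1 m) (c2 m) else c1 m) else c2 m)" for m
  have "A \<inter> B = {\<omega> \<in> space P. \<forall>m\<in>J1 \<union> J2. \<tau> m \<omega> < c m}"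
    unfolding AB c_def by (auto simp: min_less_iff_conj split: if_splits)
  moreover have "\<forall>m\<in>J1 \<union> J2. c m \<in> Cs s" using h unfolding c_def by (auto simp add: Cs_min)
  moreover have "finite (J1 \<union> J2)" "J1 \<union> J2 \<subseteq> {1..}" using h by auto
  ultimately show "A \<inter> B \<in> Gen s"
    unfolding Gen_def by (intro CollectI exI[of _ "J1 \<union> J2"] exI[of _ c]) simp
qed

lemma sets_G_sub: "sets (Gfilt P \<tau> T s) \<subseteq> sets P"
  unfolding sets_G
proof (rule sets.sigma_sets_subset)
  show "Sgen s \<subseteq> sets P"
  proof
    fix a assume "a \<in> Sgen s"
    then obtain m u where a: "a = {\<omega> \<in> space P. \<tau> m \<omega> < ennreal (T - u)}" "1 \<le> m"
      by (auto simp: Sgen_def)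
    have [measurable]: "\<tau> m \<in> borel_measurable P" using tau_rv a by simp
    show "a \<in> sets P" unfolding a by measurable
  qed
qed

lemma subalg_G: "subalgebra P (Gfilt P \<tau> T s)"
  unfolding subalgebra_def using sets_G_sub by simp

end


context L6 begin

interpretation mu: prob_space \<mu> by (rule mu_prob)
interpretation P: prob_space P by (rule P_prob)

lemma key_int:
  assumes n: "n \<ge> 1" and st: "0 \<le> s" "s \<le> t" "t \<le> Tstar" and A: "A \<in> sets (Gfilt P \<tau> T s)"
  shows "(LINT \<omega>:A|P. gM \<mu> T t (\<tau> n \<omega>) - gM \<mu> T s (\<tau> n \<omega>)) = 0"
proof -
  have [measurable]: "\<tau> n \<in> borel_measurable P" by (rule tau_rv[OF n])
  define D where "D \<omega> = gM \<mu> T t (\<tau> n \<omega>) - gM \<mu> T s (\<tau> n \<omega>)" for \<omega>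
  have Dm[measurable]: "D \<in> borel_measurable P" unfolding D_def by measurable
  have Dint: "integrable P D"
  proof (rule P_int_bounded[OF Dm, where B="(2 + 1/F0) + (2 + 1/F0)"])
    fix \<omega>
    have "\<bar>gM \<mu> T t (\<tau> n \<omega>)\<bar> \<le> 2 + 1/F0" "\<bar>gM \<mu> T s (\<tau> n \<omega>)\<bar> \<le> 2 + 1/F0"
      using gM_bound st by auto
    then show "\<bar>D \<omega>\<bar> \<le> (2 + 1/F0) + (2 + 1/F0)" unfolding D_def abs_le_iff by linarith
  qed
  have ED: "(\<integral>\<omega>. D \<omega> \<partial>P) = 0" unfolding D_def by (rule E_d[OF n st])
  have SP: "B \<in> sigma_sets (space P) (Gen s) \<Longrightarrow> B \<in> sets P" for B
    using sets_G_sub[of s] sets_G_Gen[of s] by auto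
  have A': "A \<in> sigma_sets (space P) (Gen s)" using A sets_G_Gen by simp
  have "(LINT \<omega>:A|P. D \<omega>) = 0"
    using Gen_Int_stable Gen_Pow A'
  proof (induction rule: sigma_sets_induct_disjoint)
    case (basic A)
    then obtain J c where A: "A = {\<omega> \<in> space P. \<forall>m\<in>J. \<tau> m \<omega> < c m}" and
      J: "finite J" "J \<subseteq> {1..}" "\<forall>m\<in>J. c m \<in> Cs s"
      unfolding Gen_def by blast
    define J' where "J' = J - {n}"
    define Y1 where "Y1 y = gM \<mu> T t (y n) - gM \<mu> T s (y n)" for y :: "nat \<Rightarrow> ennreal"
    define Y2 where "Y2 y = (if \<forall>m\<in>J'. y m < c m then 1 else (0::real))" for y :: "nat \<Rightarrow> ennreal"
    define X1 where "X1 \<omega> = restrict (\<lambda>i. \<tau> i \<omega>) {n}" for \<omega>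
    define X2 where "X2 \<omega> = restrict (\<lambda>i. \<tau> i \<omega>) J'" for \<omega>
    have ind: "P.indep_var (PiM {n} (\<lambda>_. borel)) X1 (PiM J' (\<lambda>_. borel)) X2"
      unfolding X1_def X2_def
      by (rule P.indep_var_restrict[OF tau_indep]) (use n J in \<open>auto simp: J'_def\<close>)
    have Y1m: "Y1 \<in> borel_measurable (PiM {n} (\<lambda>_. borel))" unfolding Y1_def by measurable
    have Y2m: "Y2 \<in> borel_measurable (PiM J' (\<lambda>_. borel))" unfolding Y2_def by measurable
    have ind2: "P.indep_var borel (Y1 \<circ> X1) borel (Y2 \<circ> X2)"
      by (rule P.indep_var_compose[OF ind Y1m Y2m])
    have e1: "Y1 \<circ> X1 = D" by (auto simp: Y1_def X1_def D_def)
    have e2: "Y2 \<circ> X2 = (\<lambda>\<omega>. if \<forall>m\<in>J'. \<tau> m \<omega> < c m then 1 else 0)"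
      by (auto simp: Y2_def X2_def)
    have X2m: "X2 \<in> measurable P (PiM J' (\<lambda>_. borel))"
      unfolding X2_def by (rule measurable_restrict) (use tau_rv J in \<open>auto simp: J'_def\<close>)
    have i2: "integrable P (Y2 \<circ> X2)"
      by (rule P_int_bounded[where B=1]) (auto intro: measurable_comp[OF X2m Y2m] simp: Y2_def)
    have prod: "(\<integral>\<omega>. (Y1 \<circ> X1) \<omega> * (Y2 \<circ> X2) \<omega> \<partial>P) = (\<integral>\<omega>. (Y1 \<circ> X1) \<omega> \<partial>P) * (\<integral>\<omega>. (Y2 \<circ> X2) \<omega> \<partial>P)"
      by (rule P.indep_var_lebesgue_integral[OF ind2]) (use Dint i2 e1 in auto)
    have eq: "indicator A \<omega> *\<^sub>R D \<omega> = D \<omega> * (Y2 \<circ> X2) \<omega>" if \<omega>: "\<omega> \<in> space P" for \<omega>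
    proof (cases "\<forall>m\<in>J'. \<tau> m \<omega> < c m")
      case False
      then have "\<omega> \<notin> A" unfolding A J'_def by auto
      then show ?thesis using False e2 by auto
    next
      case True
      show ?thesis
      proof (cases "\<omega> \<in> A")
        case True
        then show ?thesis using \<open>\<forall>m\<in>J'. \<tau> m \<omega> < c m\<close> e2 by simp
      next
        case False
        then have "n \<in> J" "\<not> \<tau> n \<omega> < c n" using True \<omega> unfolding A J'_def by auto
        then obtain u where u: "c n = ennreal (T - u)" "0 \<le> u" "u \<le> s" using J by (auto simp: Cs_def)
        then have "ennreal (T - s) \<le> c n" by (simp add: ennreal_leI)
        also have "c n \<le> \<tau> n \<omega>" using \<open>\<not> \<tau> n \<omega> < c n\<close> by simp
        finally have "D \<omega> = 0" unfolding D_def by (rule d_zero[OF st])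
        then show ?thesis by simp
      qed
    qed
    have "(LINT \<omega>:A|P. D \<omega>) = (\<integral>\<omega>. D \<omega> * (Y2 \<circ> X2) \<omega> \<partial>P)"
      unfolding set_lebesgue_integral_def by (rule Bochner_Integration.integral_cong[OF refl eq])
    also have "\<dots> = 0" using prod e1 ED by simp
    finally show ?case .
  next
    case empty
    then show ?case by (simp add: set_lebesgue_integral_def)
  next
    case (compl A)
    have AP: "A \<in> sets P" using SP compl by simp
    have "(LINT \<omega>:(space P - A)|P. D \<omega>) = (\<integral>\<omega>. D \<omega> - indicator A \<omega> *\<^sub>R D \<omega> \<partial>P)"
      unfolding set_lebesgue_integral_def
      by (intro Bochner_Integration.integral_cong) (auto simp: indicator_def)
    also have "\<dots> = (\<integral>\<omega>. D \<omega> \<partial>P) - (\<integral>\<omega>. indicator A \<omega> *\<^sub>R D \<omega> \<partial>P)"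
      using Dint integrable_mult_indicator[OF AP Dint] by simp
    also have "\<dots> = 0" using ED compl.IH by (simp add: set_lebesgue_integral_def)
    finally show ?case .
  next
    case (union A)
    have AP: "A i \<in> sets P" for i using SP union by auto
    have "(LINT \<omega>:(\<Union>i. A i)|P. D \<omega>) = (\<Sum>i. (LINT \<omega>:A i|P. D \<omega>))"
    proof (rule lebesgue_integral_countable_add)
      show "A i \<inter> A j = {}" if "i \<noteq> j" for i j
        using union(1) that by (auto simp: disjoint_family_on_def)
      show "set_integrable P (\<Union>i. A i) D"
        unfolding set_integrable_def by (rule integrable_mult_indicator[OF _ Dint]) (use AP in auto)
    qed (rule AP)
    also have "\<dots> = 0" using union.IH by simp
    finally show ?case .
  qed
  then show ?thesis by (simp add: D_def)
qed

end

context L6 begin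
interpretation mu: prob_space \<mu> by (rule mu_prob)
interpretation P: prob_space P by (rule P_prob)

lemma M_int:
  assumes n: "n \<ge> 1" and t: "0 \<le> t" "t \<le> Tstar"
  shows "integrable P (Mproc \<mu> \<tau> T n t)"
  unfolding Mproc_eq
proof (rule P_int_bounded[where B="2 + 1/F0"])
  have [measurable]: "\<tau> n \<in> borel_measurable P" by (rule tau_rv[OF n])
  show "(\<lambda>\<omega>. gM \<mu> T t (\<tau> n \<omega>)) \<in> borel_measurable P" by measurable
qed (rule gM_bound[OF t])
lemma M_meas:
  assumes n: "n \<ge> 1" and t: "0 \<le> t" "t \<le> Tstar"
  shows "Mproc \<mu> \<tau> T n t \<in> borel_measurable (Gfilt P \<tau> T t)"
proof -
  let ?G = "Gfilt P \<tau> T t"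
  let ?c1 = "ennreal (T - t)" and ?cT = "ennreal T"
  have c1T: "?c1 \<le> ?cT" using t by (simp add: ennreal_leI)
  define Y where "Y \<omega> = min (max (\<tau> n \<omega>) ?c1) ?cT" for \<omega>
  have Ym[measurable]: "Y \<in> borel_measurable ?G"
  proof (rule borel_measurableI_less)
    fix y :: ennreal
    show "{\<omega> \<in> space ?G. Y \<omega> < y} \<in> sets ?G"
    proof (cases "y \<le> ?c1")
      case True
      have "\<not> Y \<omega> < y" for \<omega>
      proof -
        have "?c1 \<le> Y \<omega>" unfolding Y_def by (rule clamp_ge[OF c1T])
        then show ?thesis using True by simp
      qed
      then have eq: "{\<omega> \<in> space ?G. Y \<omega> < y} = {}" by simp
      show ?thesis unfolding eq by simp
    next
      case y1: False
      show ?thesis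
      proof (cases "?cT < y")
        case True
        have "Y \<omega> < y" for \<omega>
          using clamp_le[of "\<tau> n \<omega>" ?c1 ?cT] True unfolding Y_def by (rule order.strict_trans1)
        then have eq: "{\<omega> \<in> space ?G. Y \<omega> < y} = space ?G" by simp
        show ?thesis unfolding eq by (rule sets.top)
      next
        case False
        then have yT: "y \<le> ?cT" by simp
        have "y < top" using yT ennreal_less_top[of T] by (rule order.strict_trans1)
        then obtain r where r: "y = ennreal r" "0 \<le> r" by (cases y rule: ennreal_cases) auto
        have rT: "r \<le> T" using yT r T_pos by (simp add: ennreal_le_iff)
        have "0 \<le> T - t" using t Tstar by simp
        then have rt: "T - t < r" using y1 r by (simp add: ennreal_less_iff not_le)
        have "{\<omega> \<in> space ?G. Y \<omega> < y} = {\<omega> \<in> space P. \<tau> n \<omega> < ennreal (T - (T - r))}"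
          using clamp_less[of ?c1 y ?cT] y1 yT r unfolding Y_def by simp
        also have "\<dots> \<in> sets ?G" using n rT rt by (intro Sgen_in_G) auto
        finally show ?thesis .
      qed
    qed
  qed
  have p1[measurable]: "Measurable.pred ?G (\<lambda>\<omega>. \<tau> n \<omega> < ?c1)"
    unfolding pred_def using Sgen_in_G[OF n t(1) order_refl] by simp
  have p2[measurable]: "Measurable.pred ?G (\<lambda>\<omega>. \<tau> n \<omega> < ennreal T)"
    unfolding pred_def using Sgen_in_G[OF n order_refl t(1)] by simp
  have "Mproc \<mu> \<tau> T n t = (\<lambda>\<omega>. (if \<tau> n \<omega> < ?c1 then 1 else 0) - (if \<tau> n \<omega> < ?cT then 1 else 0)
      + hfun \<mu> T ?c1 (Y \<omega>))"
    unfolding Mproc_eq gM_def Y_def using hfun_clamp[OF c1T] by simp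
  also have "\<dots> \<in> borel_measurable ?G" by measurable
  finally show ?thesis .
qed

lemma M_cond:
  assumes n: "n \<ge> 1" and st: "0 \<le> s" "s \<le> t" "t \<le> Tstar"
  shows "AE \<omega> in P. real_cond_exp P (Gfilt P \<tau> T s) (Mproc \<mu> \<tau> T n t) \<omega> = Mproc \<mu> \<tau> T n s \<omega>"
proof -
  interpret fs: finite_measure_subalgebra P "Gfilt P \<tau> T s"
    by (intro finite_measure_subalgebra.intro finite_measure_subalgebra_axioms.intro subalg_G)
       (rule P.finite_measure_axioms)
  have it: "integrable P (Mproc \<mu> \<tau> T n t)" using M_int[OF n] st by simp
  have is': "integrable P (Mproc \<mu> \<tau> T n s)" using M_int[OF n] st by simp
  show ?thesis
  proof (rule fs.real_cond_exp_charact[OF _ it is'])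
    show "Mproc \<mu> \<tau> T n s \<in> borel_measurable (Gfilt P \<tau> T s)" using M_meas[OF n] st by simp
    fix A assume A: "A \<in> sets (Gfilt P \<tau> T s)"
    then have AP: "A \<in> sets P" using sets_G_sub by blast
    have "(LINT \<omega>:A|P. Mproc \<mu> \<tau> T n t \<omega> - Mproc \<mu> \<tau> T n s \<omega>) = 0"
      unfolding Mproc_eq using key_int[OF n st A] by simp
    moreover have "(LINT \<omega>:A|P. Mproc \<mu> \<tau> T n t \<omega> - Mproc \<mu> \<tau> T n s \<omega>)
        = (LINT \<omega>:A|P. Mproc \<mu> \<tau> T n t \<omega>) - (LINT \<omega>:A|P. Mproc \<mu> \<tau> T n s \<omega>)"
      using integrable_mult_indicator[OF AP it] integrable_mult_indicator[OF AP is']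
      by (intro set_integral_diff(2)) (auto simp: set_integrable_def)
    ultimately show "(LINT \<omega>:A|P. Mproc \<mu> \<tau> T n t \<omega>) = (LINT \<omega>:A|P. Mproc \<mu> \<tau> T n s \<omega>)"
      by simp
  qed
qed

lemma M_exp:
  assumes n: "n \<ge> 1" and t: "0 \<le> t" "t \<le> Tstar"
  shows "P.expectation (Mproc \<mu> \<tau> T n t) = 0"
proof -
  have g0: "gM \<mu> T 0 x = 0" for x by (simp add: gM_def hfun_T)
  have "space P \<in> sets (Gfilt P \<tau> T 0)" using sets.top[of "Gfilt P \<tau> T 0"] by simp
  from key_int[OF n order_refl t(1) t(2) this]
  have "(LINT \<omega>:space P|P. gM \<mu> T t (\<tau> n \<omega>)) = 0" by (simp add: g0)
  then show ?thesis
    using set_integral_space[OF M_int[OF n t]] unfolding Mproc_eq by simp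
qed

end
theorem lemma6p2:
  fixes \<mu> :: "ennreal measure" and P :: "'w measure" and \<tau> :: "nat \<Rightarrow> 'w \<Rightarrow> ennreal"
    and T \<alpha> Tstar :: real and N :: nat
  assumes mu_prob: "prob_space \<mu>" and mu_borel: "sets \<mu> = sets borel"
    and T_pos: "T > 0"
    and alpha: "0 \<le> \<alpha>" "\<alpha> \<le> 1"
    and FTm: "\<alpha> > cdfI_left \<mu> (ennreal T)" "cdfI_left \<mu> (ennreal T) > 0"
    and F_strict: "\<And>T'. T' < ennreal T \<Longrightarrow> cdfI \<mu> T' < cdfI \<mu> (ennreal T)"
    and P_prob: "prob_space P"
    and tau_rv: "\<And>n. n \<ge> 1 \<Longrightarrow> \<tau> n \<in> borel_measurable P"
    and tau_indep: "prob_space.indep_vars P (\<lambda>_. borel) \<tau> {1..}"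
    and tau_law: "\<And>n A. n \<ge> 1 \<Longrightarrow> A \<in> sets borel \<Longrightarrow>
        measure P {\<omega> \<in> space P. \<tau> n \<omega> \<in> A} =
          measure \<mu> (A \<inter> {..<ennreal T}) * (\<alpha> / cdfI_left \<mu> (ennreal T))
          + measure \<mu> (A \<inter> {ennreal T..}) * ((1 - \<alpha>) / (1 - cdfI_left \<mu> (ennreal T)))"
    and Tstar: "0 < Tstar" "Tstar < T"
    and F_Tstar: "cdfI_left \<mu> (ennreal (T - Tstar)) > 0"
  shows "\<forall>n\<in>{1..N}.
      (\<forall>t\<in>{0..Tstar}. integrable P (Mproc \<mu> \<tau> T n t)
          \<and> Mproc \<mu> \<tau> T n t \<in> borel_measurable (Gfilt P \<tau> T t))
    \<and> (\<forall>s t. 0 \<le> s \<and> s \<le> t \<and> t \<le> Tstar \<longrightarrow>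
          (AE \<omega> in P. real_cond_exp P (Gfilt P \<tau> T s) (Mproc \<mu> \<tau> T n t) \<omega> = Mproc \<mu> \<tau> T n s \<omega>))
    \<and> (\<forall>t\<in>{0..Tstar}. prob_space.expectation P (Mproc \<mu> \<tau> T n t) = 0)"
proof -
  interpret L: L6 \<mu> P \<tau> T \<alpha> Tstar
    by (rule L6.intro[OF mu_prob mu_borel T_pos FTm(2) P_prob tau_rv tau_indep tau_law Tstar F_Tstar])
  show ?thesis
  proof (intro ballI conjI allI impI)
    fix n assume "n \<in> {1..N}"
    then have n: "n \<ge> 1" by simp
    fix t assume "t \<in> {0..Tstar}"
    then show "integrable P (Mproc \<mu> \<tau> T n t)" using L.M_int[OF n] by simp
  next
    fix n assume "n \<in> {1..N}"
    then have n: "n \<ge> 1" by simp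
    fix t assume "t \<in> {0..Tstar}"
    then show "Mproc \<mu> \<tau> T n t \<in> borel_measurable (Gfilt P \<tau> T t)" using L.M_meas[OF n] by simp
  next
    fix n s t assume "n \<in> {1..N}" "0 \<le> s \<and> s \<le> t \<and> t \<le> Tstar"
    then show "AE \<omega> in P. real_cond_exp P (Gfilt P \<tau> T s) (Mproc \<mu> \<tau> T n t) \<omega> = Mproc \<mu> \<tau> T n s \<omega>"
      using L.M_cond[of n s t] by simp
  next
    fix n assume "n \<in> {1..N}"
    then have n: "n \<ge> 1" by simp
    fix t assume "t \<in> {0..Tstar}"
    then show "prob_space.expectation P (Mproc \<mu> \<tau> T n t) = 0" using L.M_exp[OF n] by simp
  qed
qed

end
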